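(* Let $G$ be a graph and $\mathcal{C}$ a min-max clique covering of $G$ that satisfies simple intersection. For a vertex $v\in V(G)$ and two distinct cliques $C_1,C_2\in\mathcal{C}$, we have $v\in C_1\cap C_2$ if and only if $N_G[v]=C_1\cup C_2$.
   Context: A clique covering of a graph is a set of cliques such that every edge lies in at least one of them; $\operatorname{cc}(G)$ is its minimum size. A min-max clique covering is a clique covering of size $\operatorname{cc}(G)$ consisting of maximal cliques; it has simple intersection if no three distinct cliques of it share a vertex. $N_G[v]$ is the closed neighbourhood $\{v\}\cup\{u:\{u,v\}\in E(G)\}$. *)

theory Defs
  imports Main
begin

definition graph :: "'a set \<Rightarrow> 'a set set \<Rightarrow> bool" where
  "graph V E \<longleftrightarrow> finite V \<and> (\<forall>e\<in>E. \<exists>u v. e = {u, v} \<and> u \<noteq> v \<and> u \<in> V \<and> v \<in> V)"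

definition clique :: "'a set \<Rightarrow> 'a set set \<Rightarrow> 'a set \<Rightarrow> bool" where
  "clique V E C \<longleftrightarrow> C \<subseteq> V \<and> (\<forall>u\<in>C. \<forall>v\<in>C. u \<noteq> v \<longrightarrow> {u, v} \<in> E)"

definition maximal_clique :: "'a set \<Rightarrow> 'a set set \<Rightarrow> 'a set \<Rightarrow> bool" where
  "maximal_clique V E C \<longleftrightarrow> clique V E C \<and> (\<forall>D. clique V E D \<and> C \<subseteq> D \<longrightarrow> D = C)"

definition clique_covering :: "'a set \<Rightarrow> 'a set set \<Rightarrow> 'a set set \<Rightarrow> bool" where
  "clique_covering V E \<C> \<longleftrightarrow> (\<forall>C\<in>\<C>. clique V E C) \<and> (\<forall>e\<in>E. \<exists>C\<in>\<C>. e \<subseteq> C)"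

definition cc :: "'a set \<Rightarrow> 'a set set \<Rightarrow> nat" where
  "cc V E = (LEAST k. \<exists>\<C>. clique_covering V E \<C> \<and> finite \<C> \<and> card \<C> = k)"

definition min_max_clique_covering :: "'a set \<Rightarrow> 'a set set \<Rightarrow> 'a set set \<Rightarrow> bool" where
  "min_max_clique_covering V E \<C> \<longleftrightarrow>
     clique_covering V E \<C> \<and> finite \<C> \<and> card \<C> = cc V E \<and> (\<forall>C\<in>\<C>. maximal_clique V E C)"

definition simple_intersection :: "'a set set \<Rightarrow> bool" where
  "simple_intersection \<C> \<longleftrightarrow>
     (\<forall>C1\<in>\<C>. \<forall>C2\<in>\<C>. \<forall>C3\<in>\<C>. C1 \<noteq> C2 \<and> C1 \<noteq> C3 \<and> C2 \<noteq> C3 \<longrightarrow> C1 \<inter> C2 \<inter> C3 = {})"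

definition closed_nbhd :: "'a set \<Rightarrow> 'a set set \<Rightarrow> 'a \<Rightarrow> 'a set" where
  "closed_nbhd V E v = {v} \<union> {u \<in> V. {u, v} \<in> E}"

end

theory Submission
  imports Defs
begin

theorem mainTheorem16:
  fixes V :: "'a set" and E :: "'a set set" and \<C> :: "'a set set"
  assumes "graph V E"
    and "min_max_clique_covering V E \<C>"
    and "simple_intersection \<C>"
    and "v \<in> V"
    and "C1 \<in> \<C>" and "C2 \<in> \<C>" and "C1 \<noteq> C2"
  shows "v \<in> C1 \<inter> C2 \<longleftrightarrow> closed_nbhd V E v = C1 \<union> C2"
proof
  have cov: "clique_covering V E \<C>" and mx: "\<forall>C\<in>\<C>. maximal_clique V E C"
    using assms(2) unfolding min_max_clique_covering_def by auto
  have c1: "clique V E C1" and c2: "clique V E C2"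
    using mx assms(5,6) unfolding maximal_clique_def by auto
  {
    assume v: "v \<in> C1 \<inter> C2"
    show "closed_nbhd V E v = C1 \<union> C2"
    proof
      show "C1 \<union> C2 \<subseteq> closed_nbhd V E v"
      proof
        fix u assume u: "u \<in> C1 \<union> C2"
        show "u \<in> closed_nbhd V E v"
        proof (cases "u = v")
          case True then show ?thesis unfolding closed_nbhd_def by auto
        next
          case False
          then have "{u, v} \<in> E \<and> u \<in> V" using u v c1 c2 unfolding clique_def by blast
          then show ?thesis unfolding closed_nbhd_def by auto
        qed
      qed
    next
      show "closed_nbhd V E v \<subseteq> C1 \<union> C2"
      proof
        fix u assume u: "u \<in> closed_nbhd V E v"
        show "u \<in> C1 \<union> C2"
        proof (cases "u = v")
          case True then show ?thesis using v by auto
        next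
          case False
          then have "{u, v} \<in> E" using u unfolding closed_nbhd_def by auto
          then obtain C where C: "C \<in> \<C>" "{u, v} \<subseteq> C" using cov unfolding clique_covering_def by blast
          have "C = C1 \<or> C = C2"
          proof (rule ccontr)
            assume "\<not> (C = C1 \<or> C = C2)"
            then have "C1 \<inter> C2 \<inter> C = {}" using assms(3,5,6,7) C(1)
              unfolding simple_intersection_def by blast
            then show False using v C(2) by blast
          qed
          then show ?thesis using C(2) by auto
        qed
      qed
    qed
  }
  assume eq: "closed_nbhd V E v = C1 \<union> C2"
  have vin: "v \<in> C1 \<union> C2" using eq unfolding closed_nbhd_def by auto
  have key: "v \<in> D" if D: "D \<in> \<C>" "D \<subseteq> C1 \<union> C2" for D
  proof (rule ccontr)
    assume nv: "v \<notin> D"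
    have mD: "maximal_clique V E D" using mx D(1) by auto
    have "clique V E (insert v D)"
    proof -
      have cD: "clique V E D" using mD unfolding maximal_clique_def by auto
      have "\<forall>u\<in>D. {u, v} \<in> E"
      proof
        fix u assume "u \<in> D"
        then have "u \<in> closed_nbhd V E v" "u \<noteq> v" using D(2) eq nv by auto
        then show "{u, v} \<in> E" unfolding closed_nbhd_def by auto
      qed
      then show ?thesis using cD assms(4) unfolding clique_def by (auto simp: insert_commute)
    qed
    then have "insert v D = D" using mD unfolding maximal_clique_def by blast
    then show False using nv by auto
  qed
  show "v \<in> C1 \<inter> C2" using key[OF assms(5)] key[OF assms(6)] by auto
qed

end
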